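(* With notation as below, fix $k\in[N]$ and let $\tau^{(b_k\leftrightarrow c_k)}$ and $\tau^{\mathrm{adj}}$ be as defined below. Then for all $\mathbf s\in\mathbb Z^n$ and all distinct $i,j\in\{1,\dots,n\}$ (whenever the denominators are nonzero), $$(\alpha_i-\alpha_j)\frac{\tau^{(b_k\leftrightarrow c_k)}(\mathbf s)\,\tau^{(b_k\leftrightarrow c_k)}(\mathbf s+e_i+e_j)}{\tau^{(b_k\leftrightarrow c_k)}(\mathbf s+e_i)\,\tau^{(b_k\leftrightarrow c_k)}(\mathbf s+e_j)}=(\alpha_i-\alpha_j)\frac{\tau^{\mathrm{adj}}(\mathbf s)\,\tau^{\mathrm{adj}}(\mathbf s+e_i+e_j)}{\tau^{\mathrm{adj}}(\mathbf s+e_i)\,\tau^{\mathrm{adj}}(\mathbf s+e_j)};$$ that is, the $N$-soliton solution (vertex parameters) obtained by swapping $b_k$ and $c_k$ coincides with the one obtained by keeping $b_k,c_k$ and replacing $A_j\mapsto A_j/Z_{k,j}$ ($j\neq k$), $A_k\mapsto 1/A_k$.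
   Context: Let $\alpha_1,\dots,\alpha_n\in\mathbb R$, $f(t)=\prod_{j}(t-\alpha_j)$, $N\ge1$, and for $i\in[N]=\{1,\dots,N\}$ let $A_i\neq0$, $b_i,c_i\in\mathbb R\setminus\{\alpha_1,\dots,\alpha_n\}$ with $f(b_i)=f(c_i)$, with $b_i\neq c_j$, $b_i\ne b_j$, $c_i\neq c_j$ for $i\neq j$. $e_1,\dots,e_n$ is the standard basis of $\mathbb Z^n$. Put $B_{i,j}=\frac{b_i-\alpha_j}{c_i-\alpha_j}$, $Z_{i,j}=\frac{(b_i-b_j)(c_i-c_j)}{(b_i-c_j)(c_i-b_j)}$, $f_i(\mathbf s)=A_i\prod_jB_{i,j}^{\mathbf s_j}$, $\tau(\mathbf s)=\sum_{T\subseteq[N]}\prod_{\{i<j\}\subseteq T}Z_{i,j}\prod_{i\in T}f_i(\mathbf s)$. $\tau^{(b_k\leftrightarrow c_k)}$ is $\tau$ computed after interchanging the values of $b_k$ and $c_k$; $\tau^{\mathrm{adj}}$ is $\tau$ computed with $A_j$ replaced by $A_j/Z_{k,j}$ for $j\ne k$ and $A_k$ replaced by $1/A_k$. *)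

theory Defs
  imports Complex_Main
begin

text \<open>Indices: alpha, s are indexed by 1..n; A, b, c by 1..N.
  A point s of Z^n is a function nat => int (only values on 1..n matter).\<close>

definition Bmat :: "(nat \<Rightarrow> real) \<Rightarrow> (nat \<Rightarrow> real) \<Rightarrow> (nat \<Rightarrow> real) \<Rightarrow> nat \<Rightarrow> nat \<Rightarrow> real" where
  "Bmat alpha b c i j = (b i - alpha j) / (c i - alpha j)"

definition Zmat :: "(nat \<Rightarrow> real) \<Rightarrow> (nat \<Rightarrow> real) \<Rightarrow> nat \<Rightarrow> nat \<Rightarrow> real" where
  "Zmat b c i j = ((b i - b j) * (c i - c j)) / ((b i - c j) * (c i - b j))"

definition fsol :: "nat \<Rightarrow> (nat \<Rightarrow> real) \<Rightarrow> (nat \<Rightarrow> real) \<Rightarrow> (nat \<Rightarrow> real) \<Rightarrow> (nat \<Rightarrow> real)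
    \<Rightarrow> nat \<Rightarrow> (nat \<Rightarrow> int) \<Rightarrow> real" where
  "fsol n alpha A b c i s = A i * (\<Prod>j\<in>{1..n}. Bmat alpha b c i j powi s j)"

definition tau :: "nat \<Rightarrow> nat \<Rightarrow> (nat \<Rightarrow> real) \<Rightarrow> (nat \<Rightarrow> real) \<Rightarrow> (nat \<Rightarrow> real) \<Rightarrow> (nat \<Rightarrow> real)
    \<Rightarrow> (nat \<Rightarrow> int) \<Rightarrow> real" where
  "tau n N alpha A b c s =
     (\<Sum>T\<in>Pow {1..N}. (\<Prod>(i,j)\<in>{(i,j). i \<in> T \<and> j \<in> T \<and> i < j}. Zmat b c i j)
                       * (\<Prod>i\<in>T. fsol n alpha A b c i s))"

definition shift :: "(nat \<Rightarrow> int) \<Rightarrow> nat \<Rightarrow> (nat \<Rightarrow> int)" where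
  "shift s i = s(i := s i + 1)"

definition polyf :: "nat \<Rightarrow> (nat \<Rightarrow> real) \<Rightarrow> real \<Rightarrow> real" where
  "polyf n alpha t = (\<Prod>j\<in>{1..n}. t - alpha j)"

end

theory Submission imports Defs begin

lemma pairs_insert:
  fixes Z :: "nat \<Rightarrow> nat \<Rightarrow> real"
  assumes fin: "finite T" and kT: "k \<notin> T" and sym: "\<And>x y. Z x y = Z y x"
  shows "(\<Prod>(i,j)\<in>{(i,j). i \<in> insert k T \<and> j \<in> insert k T \<and> i < j}. Z i j)
       = (\<Prod>(i,j)\<in>{(i,j). i \<in> T \<and> j \<in> T \<and> i < j}. Z i j) * (\<Prod>m\<in>T. Z k m)"
proof -
  let ?P = "{(i,j). i \<in> T \<and> j \<in> T \<and> i < j}"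
  let ?h = "\<lambda>m. (min k m, max k m)"
  have eq: "{(i,j). i \<in> insert k T \<and> j \<in> insert k T \<and> i < j} = ?P \<union> ?h ` T"
  proof (rule set_eqI, rule iffI)
    fix x assume "x \<in> {(i,j). i \<in> insert k T \<and> j \<in> insert k T \<and> i < j}"
    then obtain i j where x: "x = (i,j)" "i \<in> insert k T" "j \<in> insert k T" "i < j" by blast
    show "x \<in> ?P \<union> ?h ` T"
    proof (cases "i = k")
      case True
      then have "j \<in> T" "x = ?h j" using x by auto
      then show ?thesis by blast
    next
      case False
      show ?thesis
      proof (cases "j = k")
        case True
        then have "i \<in> T" "x = ?h i" using x \<open>i \<noteq> k\<close> by auto
        then show ?thesis by blast
      next
        case False
        then show ?thesis using x \<open>i \<noteq> k\<close> by auto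
      qed
    qed
  next
    fix x assume "x \<in> ?P \<union> ?h ` T"
    then show "x \<in> {(i,j). i \<in> insert k T \<and> j \<in> insert k T \<and> i < j}"
    proof
      assume "x \<in> ?P" then show ?thesis by auto
    next
      assume "x \<in> ?h ` T"
      then obtain m where m: "m \<in> T" "x = ?h m" by blast
      with kT have "m \<noteq> k" by auto
      then consider "m < k" | "k < m" by linarith
      then show ?thesis using m by cases auto
    qed
  qed
  have finP: "finite ?P"
    by (rule finite_subset[of _ "T \<times> T"]) (auto simp: fin)
  have disj: "?P \<inter> ?h ` T = {}" using kT by (auto simp: min_def max_def split: if_splits)
  have inj: "inj_on ?h T" using kT
    by (auto simp: inj_on_def min_def max_def split: if_splits)
  have "(\<Prod>(i,j)\<in>?h ` T. Z i j) = (\<Prod>m\<in>T. Z k m)"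
    by (subst prod.reindex[OF inj]) (auto intro!: prod.cong simp: min_def max_def sym)
  then show ?thesis
    unfolding eq using fin finP disj by (simp add: prod.union_disjoint)
qed

lemma Zmat_sym: "Zmat b c x y = Zmat b c y x"
  unfolding Zmat_def by (simp add: algebra_simps)

lemma tau_split:
  assumes k: "k \<in> {1..N}"
  shows "tau n N alpha A b c s = (\<Sum>T\<in>Pow ({1..N}-{k}).
     (\<Prod>(i,j)\<in>{(i,j). i \<in> T \<and> j \<in> T \<and> i < j}. Zmat b c i j) * (\<Prod>i\<in>T. fsol n alpha A b c i s)
   + (\<Prod>(i,j)\<in>{(i,j). i \<in> T \<and> j \<in> T \<and> i < j}. Zmat b c i j) * (\<Prod>m\<in>T. Zmat b c k m)
      * (fsol n alpha A b c k s * (\<Prod>i\<in>T. fsol n alpha A b c i s)))"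
proof -
  let ?P = "{1..N}-{k}"
  have e: "{1..N} = insert k ?P" using k by auto
  have fin: "finite (Pow ?P)" by simp
  have disj: "Pow ?P \<inter> insert k ` Pow ?P = {}" by auto
  have inj: "inj_on (insert k) (Pow ?P)" unfolding inj_on_def by auto
  have "tau n N alpha A b c s = (\<Sum>T\<in>Pow ?P \<union> insert k ` Pow ?P.
      (\<Prod>(i,j)\<in>{(i,j). i \<in> T \<and> j \<in> T \<and> i < j}. Zmat b c i j) * (\<Prod>i\<in>T. fsol n alpha A b c i s))"
    unfolding tau_def by (subst e) (simp only: Pow_insert)
  also have "\<dots> = (\<Sum>T\<in>Pow ?P. (\<Prod>(i,j)\<in>{(i,j). i \<in> T \<and> j \<in> T \<and> i < j}. Zmat b c i j) * (\<Prod>i\<in>T. fsol n alpha A b c i s))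
     + (\<Sum>T\<in>insert k ` Pow ?P. (\<Prod>(i,j)\<in>{(i,j). i \<in> T \<and> j \<in> T \<and> i < j}. Zmat b c i j) * (\<Prod>i\<in>T. fsol n alpha A b c i s))"
    by (rule sum.union_disjoint) (use disj in auto)
  also have "(\<Sum>T\<in>insert k ` Pow ?P. (\<Prod>(i,j)\<in>{(i,j). i \<in> T \<and> j \<in> T \<and> i < j}. Zmat b c i j) * (\<Prod>i\<in>T. fsol n alpha A b c i s))
     = (\<Sum>T\<in>Pow ?P. (\<Prod>(i,j)\<in>{(i,j). i \<in> T \<and> j \<in> T \<and> i < j}. Zmat b c i j) * (\<Prod>m\<in>T. Zmat b c k m)
      * (fsol n alpha A b c k s * (\<Prod>i\<in>T. fsol n alpha A b c i s)))"
    apply (subst sum.reindex[OF inj])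
    apply (rule sum.cong[OF refl])
    apply (simp only: o_def)
    apply (subst pairs_insert)
    subgoal by (auto intro: finite_subset)
    subgoal by auto
    subgoal by (rule Zmat_sym)
    apply (subst prod.insert)
    subgoal by (auto intro: finite_subset)
    subgoal by auto
    by simp
  finally show ?thesis by (simp add: sum.distrib)
qed

lemma key:
  fixes n N k :: nat and alpha A b c :: "nat \<Rightarrow> real" and s :: "nat \<Rightarrow> int"
  assumes A_nz: "\<forall>m\<in>{1..N}. A m \<noteq> 0"
    and b_notin: "\<forall>m\<in>{1..N}. \<forall>l\<in>{1..n}. b m \<noteq> alpha l"
    and c_notin: "\<forall>m\<in>{1..N}. \<forall>l\<in>{1..n}. c m \<noteq> alpha l"
    and distinct_bc: "\<forall>m\<in>{1..N}. \<forall>m'\<in>{1..N}. m \<noteq> m' \<longrightarrow>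
                  b m \<noteq> c m' \<and> b m \<noteq> b m' \<and> c m \<noteq> c m'"
    and k: "k \<in> {1..N}"
  shows "tau n N alpha A (b(k := c k)) (c(k := b k)) s
       = (A k / (\<Prod>j\<in>{1..n}. Bmat alpha b c k j powi s j))
         * tau n N alpha (\<lambda>m. if m = k then 1 / A k else A m / Zmat b c k m) b c s"
proof -
  define bs where "bs = b(k := c k)"
  define cs where "cs = c(k := b k)"
  define A' where "A' = (\<lambda>m. if m = k then 1 / A k else A m / Zmat b c k m)"
  define G where "G = (\<Prod>j\<in>{1..n}. Bmat alpha b c k j powi s j)"
  define P where "P = {1..N} - {k}"
  have a: "A k \<noteq> 0" using A_nz k by auto
  have G: "G \<noteq> 0" unfolding G_def Bmat_def using b_notin c_notin k
    by (auto simp: prod_zero_iff)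
  have Znz: "Zmat b c k m \<noteq> 0" if "m \<in> P" for m
    using that distinct_bc[rule_format, of k m] distinct_bc[rule_format, of m k] k unfolding P_def Zmat_def by auto
  have Zs: "Zmat bs cs k m = 1 / Zmat b c k m" if "m \<in> P" for m
    using that unfolding P_def Zmat_def bs_def cs_def by (auto simp: mult.commute)
  have Zp: "Zmat bs cs i j = Zmat b c i j" if "i \<in> P" "j \<in> P" for i j
    using that unfolding P_def Zmat_def bs_def cs_def by auto
  have fs: "fsol n alpha A bs cs m s = fsol n alpha A b c m s" if "m \<noteq> k" for m
    using that unfolding fsol_def Bmat_def bs_def cs_def by auto
  have fsk: "fsol n alpha A bs cs k s = A k / G"
  proof -
    have "fsol n alpha A bs cs k s = A k * (\<Prod>j\<in>{1..n}. inverse (Bmat alpha b c k j powi s j))"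
      unfolding fsol_def bs_def cs_def Bmat_def
      by (auto simp: power_int_inverse[symmetric] intro!: prod.cong)
    also have "\<dots> = A k / G" unfolding G_def
      using prod_inversef[of "\<lambda>j. Bmat alpha b c k j powi s j" "{1..n}"]
      by (simp add: o_def divide_inverse)
    finally show ?thesis .
  qed
  have fa: "fsol n alpha A' b c m s = fsol n alpha A b c m s / Zmat b c k m" if "m \<noteq> k" for m
    using that unfolding fsol_def A'_def by auto
  have fak: "fsol n alpha A' b c k s = G / A k"
    unfolding fsol_def A'_def G_def by simp
  have "tau n N alpha A bs cs s = (A k / G) * tau n N alpha A' b c s"
    unfolding tau_split[OF k, of n alpha A bs cs s] tau_split[OF k, of n alpha A' b c s]
    unfolding sum_distrib_left P_def[symmetric]
  proof (rule sum.cong[OF refl])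
    fix T assume "T \<in> Pow P"
    then have TP: "T \<subseteq> P" by auto
    have kT: "k \<notin> T" using TP unfolding P_def by auto
    define Zq where "Zq = (\<Prod>(i,j)\<in>{(i,j). i \<in> T \<and> j \<in> T \<and> i < j}. Zmat b c i j)"
    define F where "F = (\<Prod>i\<in>T. fsol n alpha A b c i s)"
    define Q where "Q = (\<Prod>m\<in>T. Zmat b c k m)"
    have finT: "finite T" using TP finite_subset unfolding P_def by blast
    have Q: "Q \<noteq> 0" unfolding Q_def using Znz TP finT
      by (auto simp: prod_zero_iff)
    have e1: "(\<Prod>(i,j)\<in>{(i,j). i \<in> T \<and> j \<in> T \<and> i < j}. Zmat bs cs i j) = Zq"
      unfolding Zq_def using TP Zp by (auto intro!: prod.cong)
    have e2: "(\<Prod>m\<in>T. Zmat bs cs k m) = 1 / Q"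
      unfolding Q_def using TP Zs by (simp add: prod_dividef subset_iff)
    have e3: "(\<Prod>i\<in>T. fsol n alpha A bs cs i s) = F"
      unfolding F_def using kT fs by (intro prod.cong refl) metis
    have e4: "(\<Prod>i\<in>T. fsol n alpha A' b c i s) = F / Q"
      unfolding F_def Q_def using kT fa by (simp add: prod_dividef[symmetric]) (intro prod.cong refl, metis)
    show "(\<Prod>(i,j)\<in>{(i,j). i \<in> T \<and> j \<in> T \<and> i < j}. Zmat bs cs i j) * (\<Prod>i\<in>T. fsol n alpha A bs cs i s)
   + (\<Prod>(i,j)\<in>{(i,j). i \<in> T \<and> j \<in> T \<and> i < j}. Zmat bs cs i j) * (\<Prod>m\<in>T. Zmat bs cs k m)
      * (fsol n alpha A bs cs k s * (\<Prod>i\<in>T. fsol n alpha A bs cs i s))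
   = A k / G * ((\<Prod>(i,j)\<in>{(i,j). i \<in> T \<and> j \<in> T \<and> i < j}. Zmat b c i j) * (\<Prod>i\<in>T. fsol n alpha A' b c i s)
   + (\<Prod>(i,j)\<in>{(i,j). i \<in> T \<and> j \<in> T \<and> i < j}. Zmat b c i j) * (\<Prod>m\<in>T. Zmat b c k m)
      * (fsol n alpha A' b c k s * (\<Prod>i\<in>T. fsol n alpha A' b c i s)))"
      unfolding e1 e2 e3 e4 fsk fak Zq_def[symmetric] Q_def[symmetric]
      using a G Q by (simp add: field_simps)
  qed
  then show ?thesis unfolding bs_def cs_def A'_def G_def .
qed

lemma gshift:
  fixes B :: "nat \<Rightarrow> real"
  assumes i: "i \<in> {1..n}" and Bi: "B i \<noteq> 0"
  shows "(\<Prod>j\<in>{1..n}. B j powi (shift s i) j) = (\<Prod>j\<in>{1..n}. B j powi s j) * B i"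
proof -
  have "(\<Prod>j\<in>{1..n}. B j powi (shift s i) j) = B i powi (s i + 1) * (\<Prod>j\<in>{1..n}-{i}. B j powi (shift s i) j)"
    using prod.remove[OF _ i, of "\<lambda>j. B j powi (shift s i) j"] by (simp add: shift_def)
  also have "(\<Prod>j\<in>{1..n}-{i}. B j powi (shift s i) j) = (\<Prod>j\<in>{1..n}-{i}. B j powi s j)"
    by (rule prod.cong) (auto simp: shift_def)
  also have "(\<Prod>j\<in>{1..n}. B j powi s j) = B i powi s i * (\<Prod>j\<in>{1..n}-{i}. B j powi s j)"
    using prod.remove[OF _ i, of "\<lambda>j. B j powi s j"] by simp
  ultimately show ?thesis using Bi by (simp add: power_int_add_1)
qed

theorem corollary8p9:
  fixes n N k :: nat and alpha A b c :: "nat \<Rightarrow> real"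
    and s :: "nat \<Rightarrow> int" and i j :: nat
  assumes N1: "N \<ge> 1"
    and A_nz: "\<forall>m\<in>{1..N}. A m \<noteq> 0"
    and b_notin: "\<forall>m\<in>{1..N}. \<forall>l\<in>{1..n}. b m \<noteq> alpha l"
    and c_notin: "\<forall>m\<in>{1..N}. \<forall>l\<in>{1..n}. c m \<noteq> alpha l"
    and f_eq: "\<forall>m\<in>{1..N}. polyf n alpha (b m) = polyf n alpha (c m)"
    and distinct_bc: "\<forall>m\<in>{1..N}. \<forall>m'\<in>{1..N}. m \<noteq> m' \<longrightarrow>
                  b m \<noteq> c m' \<and> b m \<noteq> b m' \<and> c m \<noteq> c m'"
    and k: "k \<in> {1..N}"
    and ij: "i \<in> {1..n}" "j \<in> {1..n}" "i \<noteq> j"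
    and nz_swap:
      "tau n N alpha A (b(k := c k)) (c(k := b k)) (shift s i) \<noteq> 0"
      "tau n N alpha A (b(k := c k)) (c(k := b k)) (shift s j) \<noteq> 0"
    and nz_adj:
      "tau n N alpha (\<lambda>m. if m = k then 1 / A k else A m / Zmat b c k m) b c (shift s i) \<noteq> 0"
      "tau n N alpha (\<lambda>m. if m = k then 1 / A k else A m / Zmat b c k m) b c (shift s j) \<noteq> 0"
  shows
    "(alpha i - alpha j) *
       (tau n N alpha A (b(k := c k)) (c(k := b k)) s
         * tau n N alpha A (b(k := c k)) (c(k := b k)) (shift (shift s i) j))
     / (tau n N alpha A (b(k := c k)) (c(k := b k)) (shift s i)
         * tau n N alpha A (b(k := c k)) (c(k := b k)) (shift s j))
   = (alpha i - alpha j) *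
       (tau n N alpha (\<lambda>m. if m = k then 1 / A k else A m / Zmat b c k m) b c s
         * tau n N alpha (\<lambda>m. if m = k then 1 / A k else A m / Zmat b c k m) b c (shift (shift s i) j))
     / (tau n N alpha (\<lambda>m. if m = k then 1 / A k else A m / Zmat b c k m) b c (shift s i)
         * tau n N alpha (\<lambda>m. if m = k then 1 / A k else A m / Zmat b c k m) b c (shift s j))"
proof -
  define g where "g = (\<lambda>s. \<Prod>j\<in>{1..n}. Bmat alpha b c k j powi s j)"
  have K: "\<And>s. tau n N alpha A (b(k := c k)) (c(k := b k)) s
       = (A k / g s) * tau n N alpha (\<lambda>m. if m = k then 1 / A k else A m / Zmat b c k m) b c s"
    unfolding g_def by (rule key[OF A_nz b_notin c_notin distinct_bc k])
  have Bnz: "Bmat alpha b c k l \<noteq> 0" if "l \<in> {1..n}" for l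
    using b_notin c_notin k that unfolding Bmat_def by auto
  have g0: "g s \<noteq> 0" unfolding g_def using Bnz by (auto simp: prod_zero_iff)
  have gi: "g (shift s i) = g s * Bmat alpha b c k i"
    unfolding g_def by (rule gshift[where B="Bmat alpha b c k", OF ij(1) Bnz[OF ij(1)]])
  have gj: "g (shift s j) = g s * Bmat alpha b c k j"
    unfolding g_def by (rule gshift[where B="Bmat alpha b c k", OF ij(2) Bnz[OF ij(2)]])
  have gij: "g (shift (shift s i) j) = g s * Bmat alpha b c k i * Bmat alpha b c k j"
    using gshift[where B="Bmat alpha b c k" and s="shift s i", OF ij(2) Bnz[OF ij(2)]] gi unfolding g_def by simp
  have a: "A k \<noteq> 0" using A_nz k by auto
  have gen: "d * ((a/G) * X * ((a/(G*u*v)) * Y)) / ((a/(G*u)) * P * ((a/(G*v)) * Q))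
     = d * (X * Y) / (P * Q)" if "a \<noteq> 0" "G \<noteq> 0" "u \<noteq> 0" "v \<noteq> 0" for d a G u v X Y P Q :: real
  proof -
    define cc where "cc = a*a/(G*G*u*v)"
    have cc: "cc \<noteq> 0" using that unfolding cc_def by simp
    have "d * ((a/G) * X * ((a/(G*u*v)) * Y)) = cc * (d * (X*Y))" unfolding cc_def by (simp add: field_simps)
    moreover have "(a/(G*u)) * P * ((a/(G*v)) * Q) = cc * (P*Q)" unfolding cc_def by (simp add: field_simps)
    ultimately show ?thesis using cc by simp
  qed
  show ?thesis unfolding K gi gj gij
    by (rule gen[OF a g0 Bnz[OF ij(1)] Bnz[OF ij(2)]])
qed

end
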